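(* Let $\mathbf{F}\in\{\mathbf{R},\mathbf{C}\}$, $x_*\in\mathbf{F}^d$, and let $A_1,\dots,A_n\in\mathbf{H}_d$ be positive semidefinite, with exact measurements $y=\mathcal{A}(x_*x_*^* )$. For an integer $p\ge1$ consider $$\min_{X\in\mathbf{F}^{d\times p}} f_p(X),\qquad f_p(X)=\|y-\mathcal{A}(XX^* )\|^2 .$$ Suppose that for some constants $\alpha,\beta,L\ge0$, for all $X\in\mathbf{F}^{d\times p}$, $$\tfrac1n\|\mathcal{A}(XX^*-x_*x_*^* )\|^2\ge\alpha\|XX^*-x_*x_*^*\|_F^2+\beta(\|X\|_F^2-\|x_*\|^2)^2,$$ and $$\tfrac1n\mathcal{A}^*\mathcal{A}(x_*x_*^* )\preceq L\|x_*\|^2 I_d .$$ If $(p+2)\left(1+\frac{\beta}{p\beta+\alpha}\right)\alpha>2L$, then every second-order critical point $X$ of $f_p$ satisfies $XX^*=x_*x_*^*$.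
   Context: $\mathbf{H}_d$ denotes the set of $d\times d$ Hermitian matrices over $\mathbf{F}$ with the (real) Frobenius inner product $\langle A,B\rangle=\operatorname{Re}\operatorname{tr}(A^*B)$. $\mathcal{A}:\mathbf{H}_d\to\mathbf{R}^n$ is $\mathcal{A}(S)=(\langle A_1,S\rangle,\dots,\langle A_n,S\rangle)$, with adjoint $\mathcal{A}^*(z)=\sum_iz_iA_i$. $\preceq$ is the positive semidefinite order. A second-order critical point is a point where the gradient is zero and the Hessian quadratic form is positive semidefinite; in the complex case the objective is regarded as a function of the real and imaginary parts of $X$. *)

theory Defs
  imports "HOL-Analysis.Analysis"
begin

text \<open>Matrices are rendered with the HOL-Analysis vector types:
  a d x p matrix over F is of type F^'p^'d (rows indexed by 'd).
  The field F is R or C; the conjugation cj and the real part rp are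
  passed explicitly (cj = id, rp = id for R; cj = cnj, rp = Re for C).\<close>

definition adj :: "('a \<Rightarrow> 'a) \<Rightarrow> 'a^'m^'n \<Rightarrow> 'a^'n^'m" where
  "adj cj M = (\<chi> i j. cj (M $ j $ i))"

definition frob :: "('a::comm_ring_1 \<Rightarrow> 'a) \<Rightarrow> ('a \<Rightarrow> real) \<Rightarrow> 'a^'m^'n \<Rightarrow> 'a^'m^'n \<Rightarrow> real" where
  "frob cj rp A B = rp (\<Sum>i\<in>UNIV. \<Sum>j\<in>UNIV. cj (A $ i $ j) * B $ i $ j)"

definition meas :: "('a::comm_ring_1 \<Rightarrow> 'a) \<Rightarrow> ('a \<Rightarrow> real) \<Rightarrow> ('k \<Rightarrow> 'a^'d^'d) \<Rightarrow> 'a^'d^'d \<Rightarrow> real^'k" where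
  "meas cj rp A S = (\<chi> k. frob cj rp (A k) S)"

definition meas_adj :: "('k::finite \<Rightarrow> 'a::real_normed_algebra_1^'d^'d) \<Rightarrow> real^'k \<Rightarrow> 'a^'d^'d" where
  "meas_adj A z = (\<Sum>k\<in>UNIV. (z $ k) *\<^sub>R A k)"

definition outer :: "('a::comm_ring_1 \<Rightarrow> 'a) \<Rightarrow> 'a^'d \<Rightarrow> 'a^'d^'d" where
  "outer cj x = (\<chi> i j. x $ i * cj (x $ j))"

definition gram :: "('a::comm_ring_1 \<Rightarrow> 'a) \<Rightarrow> 'a^'p^'d \<Rightarrow> 'a^'d^'d" where
  "gram cj X = X ** adj cj X"

definition hermitian :: "('a \<Rightarrow> 'a) \<Rightarrow> 'a^'d^'d \<Rightarrow> bool" where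
  "hermitian cj M \<longleftrightarrow> adj cj M = M"

definition psd :: "('a::comm_ring_1 \<Rightarrow> 'a) \<Rightarrow> ('a \<Rightarrow> real) \<Rightarrow> 'a^'d^'d \<Rightarrow> bool" where
  "psd cj rp M \<longleftrightarrow> hermitian cj M \<and> (\<forall>v. rp (\<Sum>i\<in>UNIV. cj (v $ i) * (M *v v) $ i) \<ge> 0)"

definition loewner_le :: "('a::comm_ring_1 \<Rightarrow> 'a) \<Rightarrow> ('a \<Rightarrow> real) \<Rightarrow> 'a^'d^'d \<Rightarrow> 'a^'d^'d \<Rightarrow> bool" where
  "loewner_le cj rp A B \<longleftrightarrow> psd cj rp (B - A)"

definition fobj :: "('a::comm_ring_1 \<Rightarrow> 'a) \<Rightarrow> ('a \<Rightarrow> real) \<Rightarrow> ('k \<Rightarrow> 'a^'d^'d) \<Rightarrow> real^'k \<Rightarrow> 'a^'p^'d \<Rightarrow> real" where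
  "fobj cj rp A y X = (norm (y - meas cj rp A (gram cj X)))\<^sup>2"

text \<open>Second-order critical point of a real function on a real normed space
  (the complex matrices are regarded as a real vector space, i.e. as functions
  of real and imaginary parts): first Frechet derivative vanishes and the
  second Frechet derivative (Hessian) quadratic form is positive semidefinite.\<close>
definition sosp :: "('v::real_normed_vector \<Rightarrow> real) \<Rightarrow> 'v \<Rightarrow> bool" where
  "sosp f X \<longleftrightarrow> (\<exists>f' f''.
      (\<forall>Y. (f has_derivative blinfun_apply (f' Y)) (at Y)) \<and>
      (f' has_derivative blinfun_apply f'') (at X) \<and>
      f' X = 0 \<and>
      (\<forall>V. blinfun_apply (blinfun_apply f'' V) V \<ge> 0))"

end

theory Submission
  imports Defs
begin


lemma sosp_poly:
  fixes f :: "'v::real_normed_vector \<Rightarrow> real"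
  assumes "sosp f X"
    and poly: "\<And>t. f (X + t *\<^sub>R U) = c0 + c1*t + c2*t^2 + c3*t^3 + c4*t^4"
  shows "c1 = 0 \<and> c2 \<ge> 0"
proof -
  obtain f' f'' where d1: "\<And>Y. (f has_derivative blinfun_apply (f' Y)) (at Y)"
    and d2: "(f' has_derivative blinfun_apply f'') (at X)"
    and z: "f' X = 0" and pos: "\<And>V. blinfun_apply (blinfun_apply f'' V) V \<ge> 0"
    using assms(1) unfolding sosp_def by blast
  have line: "((\<lambda>t. X + t *\<^sub>R U) has_derivative (\<lambda>h. h *\<^sub>R U)) (at t)" for t
    by (auto intro!: derivative_eq_intros)
  have D1: "((\<lambda>t. f (X + t *\<^sub>R U)) has_field_derivative blinfun_apply (f' (X + t *\<^sub>R U)) U) (at t)" for t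
  proof -
    have "((\<lambda>t. f (X + t *\<^sub>R U)) has_derivative (\<lambda>h. blinfun_apply (f' (X + t *\<^sub>R U)) (h *\<^sub>R U))) (at t)"
      by (rule has_derivative_compose[OF line d1])
    moreover have "(\<lambda>h. blinfun_apply (f' (X + t *\<^sub>R U)) (h *\<^sub>R U)) = (*) (blinfun_apply (f' (X + t *\<^sub>R U)) U)"
      by (auto simp: blinfun.scaleR_right)
    ultimately show ?thesis by (simp add: has_field_derivative_def)
  qed
  have P1: "((\<lambda>t. c0 + c1*t + c2*t^2 + c3*t^3 + c4*t^4) has_field_derivative (c1 + 2*c2*t + 3*c3*t^2 + 4*c4*t^3)) (at t)" for t
    by (auto intro!: derivative_eq_intros simp: algebra_simps power2_eq_square power3_eq_cube)
  have E: "blinfun_apply (f' (X + t *\<^sub>R U)) U = c1 + 2*c2*t + 3*c3*t^2 + 4*c4*t^3" for t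
    using DERIV_unique[OF D1[of t]] P1[of t] poly by (simp add: poly)
  have c1: "c1 = 0" using E[of 0] z by simp
  have "((\<lambda>t. f' (X + t *\<^sub>R U)) has_derivative (\<lambda>h. blinfun_apply f'' (h *\<^sub>R U))) (at 0)"
    using has_derivative_compose[OF line[of 0], of f' f''] d2 by simp
  then have "((\<lambda>t. blinfun_apply (f' (X + t *\<^sub>R U)) U) has_derivative (\<lambda>h. blinfun_apply (blinfun_apply f'' (h *\<^sub>R U)) U)) (at 0)"
    by (rule bounded_linear.has_derivative[OF blinfun.bounded_linear_left])
  moreover have "(\<lambda>h. blinfun_apply (blinfun_apply f'' (h *\<^sub>R U)) U) = (*) (blinfun_apply (blinfun_apply f'' U) U)"
    by (auto simp: blinfun.scaleR_right blinfun.scaleR_left)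
  ultimately have D2: "((\<lambda>t. blinfun_apply (f' (X + t *\<^sub>R U)) U) has_field_derivative blinfun_apply (blinfun_apply f'' U) U) (at 0)"
    by (simp add: has_field_derivative_def)
  have P2: "((\<lambda>t. c1 + 2*c2*t + 3*c3*t^2 + 4*c4*t^3) has_field_derivative 2*c2) (at 0)"
    by (auto intro!: derivative_eq_intros)
  have "blinfun_apply (blinfun_apply f'' U) U = 2*c2"
    using DERIV_unique[OF D2] P2 E by simp
  with pos[of U] c1 show ?thesis by simp
qed


definition cdot :: "('a::comm_ring_1 \<Rightarrow> 'a) \<Rightarrow> 'a^'n \<Rightarrow> 'a^'n \<Rightarrow> 'a" where
  "cdot cj u v = (\<Sum>i\<in>UNIV. cj (u$i) * v$i)"

definition rank1 :: "('a::comm_ring_1 \<Rightarrow> 'a) \<Rightarrow> 'a^'m \<Rightarrow> 'a^'n \<Rightarrow> 'a^'n^'m" where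
  "rank1 cj u w = (\<chi> i j. u$i * cj (w$j))"

locale cfield =
  fixes cj :: "'a::{euclidean_space, real_normed_field} \<Rightarrow> 'a" and rp :: "'a \<Rightarrow> real"
  assumes cj_add: "cj (a + b) = cj a + cj b"
    and cj_mult: "cj (a * b) = cj a * cj b"
    and cj_cj[simp]: "cj (cj a) = a"
    and cj_scaleR: "cj (r *\<^sub>R a) = r *\<^sub>R cj a"
    and cj_one[simp]: "cj 1 = 1"
    and inner_cj: "inner a b = rp (cj a * b)"
    and rp_cj[simp]: "rp (cj a) = rp a"
    and cj_self: "cj a * a = of_real (norm a ^ 2)"
begin

lemma rp_inner: "rp b = inner 1 b" using inner_cj[of 1 b] by simp

lemma rp_add: "rp (a + b) = rp a + rp b" by (simp add: rp_inner inner_add_right)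
lemma rp_diff: "rp (a - b) = rp a - rp b" by (simp add: rp_inner inner_diff_right)
lemma rp_minus: "rp (- a) = - rp a" by (simp add: rp_inner)
lemma rp_zero[simp]: "rp 0 = 0" by (simp add: rp_inner)
lemma rp_scaleR: "rp (r *\<^sub>R a) = r * rp a" by (simp add: rp_inner)
lemma rp_sum: "rp (sum f S) = (\<Sum>i\<in>S. rp (f i))" by (simp add: rp_inner inner_sum_right)
lemma inner_one_one: "inner (1::'a) 1 = 1"
  by (simp add: power2_norm_eq_inner[symmetric])
lemma rp_of_real[simp]: "rp (of_real r) = r"
  by (simp add: rp_inner of_real_def inner_one_one)

lemma cj_zero[simp]: "cj 0 = 0"
  using cj_add[of 0 0] by simp
lemma cj_minus: "cj (- a) = - cj a"
  using cj_add[of a "-a"] by (simp add: eq_neg_iff_add_eq_0 add.commute)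
lemma cj_diff: "cj (a - b) = cj a - cj b"
  using cj_add[of a "-b"] by (simp add: cj_minus)
lemma cj_sum: "cj (sum f S) = (\<Sum>i\<in>S. cj (f i))"
  by (induction S rule: infinite_finite_induct) (auto simp: cj_add)
lemma cj_of_real[simp]: "cj (of_real r) = of_real r"
  using cj_scaleR[of r 1] by (simp add: of_real_def)

lemma inner_vec_cdot: "inner (u::'a^'n) v = rp (cdot cj u v)"
  by (simp add: inner_vec_def cdot_def rp_sum inner_cj)

lemma cdot_self: "cdot cj (u::'a^'n) u = of_real ((norm u)^2)"
proof -
  have "cdot cj u u = (\<Sum>i\<in>UNIV. of_real ((norm (u$i))^2))"
    by (simp add: cdot_def cj_self)
  also have "\<dots> = of_real (\<Sum>i\<in>UNIV. (norm (u$i))^2)" by simp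
  also have "(\<Sum>i\<in>UNIV. (norm (u$i))^2) = (norm u)^2"
    by (simp add: norm_vec_def L2_set_def sum_nonneg)
  finally show ?thesis .
qed

lemma cdot_swap: "cdot cj v (u::'a^'n) = cj (cdot cj u v)"
  by (simp add: cdot_def cj_sum cj_mult mult.commute)

lemma cdot_zero_right[simp]: "cdot cj u 0 = 0" by (simp add: cdot_def)
lemma cdot_zero_left[simp]: "cdot cj 0 u = 0" by (simp add: cdot_def)

lemma frob_inner: "frob cj rp (A::'a^'m^'n) B = inner A B"
  by (simp add: frob_def inner_vec_def rp_sum inner_cj)

lemma meas_eq: "meas cj rp A S = (\<chi> k. inner (A k) S)"
  by (simp add: meas_def frob_inner)

lemma cdot_mv: "cdot cj ((A::'a^'n^'m) *v z) w = cdot cj z (adj cj A *v w)"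
proof -
  have "cdot cj (A *v z) w = (\<Sum>i\<in>UNIV. \<Sum>j\<in>UNIV. cj (A$i$j) * cj (z$j) * w$i)"
    by (simp add: cdot_def matrix_vector_mult_def cj_sum cj_mult sum_distrib_right)
  also have "\<dots> = (\<Sum>j\<in>UNIV. \<Sum>i\<in>UNIV. cj (A$i$j) * cj (z$j) * w$i)"
    by (rule sum.swap)
  also have "\<dots> = cdot cj z (adj cj A *v w)"
    by (simp add: cdot_def matrix_vector_mult_def adj_def sum_distrib_left mult_ac)
  finally show ?thesis .
qed

lemma inner_mv: "inner ((A::'a^'n^'m) *v z) w = inner z (adj cj A *v w)"
  by (simp add: inner_vec_cdot cdot_mv)

lemma adj_adj[simp]: "adj cj (adj cj A) = A"
  by (simp add: adj_def vec_eq_iff)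

lemma adj_add: "adj cj (A + B) = adj cj A + adj cj B"
  by (simp add: adj_def vec_eq_iff cj_add)
lemma adj_diff: "adj cj (A - B) = adj cj A - adj cj B"
  by (simp add: adj_def vec_eq_iff cj_diff)
lemma adj_scaleR: "adj cj (r *\<^sub>R A) = r *\<^sub>R adj cj A"
  by (simp add: adj_def vec_eq_iff cj_scaleR)
lemma adj_zero[simp]: "adj cj 0 = 0"
  by (simp add: adj_def vec_eq_iff)
lemma adj_mat1[simp]: "adj cj (mat 1) = mat 1"
  by (simp add: adj_def vec_eq_iff mat_def)
lemma adj_mult: "adj cj ((A::'a^'n^'m) ** (B::'a^'p^'n)) = adj cj B ** adj cj A"
  by (simp add: adj_def vec_eq_iff matrix_matrix_mult_def cj_sum cj_mult mult.commute)

lemma inner_rank1: "inner (A::'a^'n^'m) (rank1 cj v w) = inner v (A *v w)"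
proof -
  have "inner A (rank1 cj v w) = rp (\<Sum>i\<in>UNIV. \<Sum>j\<in>UNIV. cj (A$i$j) * (v$i * cj (w$j)))"
    by (simp add: inner_vec_def rp_sum inner_cj rank1_def)
  also have "\<dots> = rp (cj (\<Sum>i\<in>UNIV. \<Sum>j\<in>UNIV. cj (A$i$j) * (v$i * cj (w$j))))"
    by simp
  also have "\<dots> = rp (cdot cj v (A *v w))"
    by (simp add: cj_sum cj_mult cdot_def matrix_vector_mult_def sum_distrib_left mult_ac)
  finally show ?thesis by (simp add: inner_vec_cdot)
qed

lemma rank1_mv: "rank1 cj u w *v v = cdot cj w v *s u"
  by (simp add: rank1_def matrix_vector_mult_def cdot_def vec_eq_iff sum_distrib_left mult_ac)

lemma mult_adj_rank1: "(X::'a^'p^'d) ** adj cj (rank1 cj u z) = rank1 cj (X *v z) u"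
  by (simp add: rank1_def adj_def matrix_matrix_mult_def matrix_vector_mult_def vec_eq_iff
      sum_distrib_right sum_distrib_left cj_sum cj_mult mult_ac)

lemma rank1_mult_adj: "rank1 cj u z ** adj cj (X::'a^'p^'d) = rank1 cj u (X *v z)"
  by (simp add: rank1_def adj_def matrix_matrix_mult_def matrix_vector_mult_def vec_eq_iff
      sum_distrib_left cj_sum cj_mult mult_ac)

lemma rank1_axis_sq: "rank1 cj u (axis j (1::'a)) ** adj cj (rank1 cj u (axis j 1)) = rank1 cj u u"
proof -
  have "cdot cj (axis j (1::'a)) (axis j 1) = 1"
    by (simp add: cdot_def axis_def if_distrib if_distribR cong: if_cong)
  then show ?thesis by (simp only: rank1_mult_adj rank1_mv) simp
qed

lemma rank1_add_left: "rank1 cj (u + v) w = rank1 cj u w + rank1 cj v w"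
  by (simp add: rank1_def vec_eq_iff algebra_simps)
lemma rank1_add_right: "rank1 cj w (u + v) = rank1 cj w u + rank1 cj w v"
  by (simp add: rank1_def vec_eq_iff algebra_simps cj_add)
lemma rank1_diff_left: "rank1 cj (u - v) w = rank1 cj u w - rank1 cj v w"
  by (simp add: rank1_def vec_eq_iff algebra_simps)
lemma rank1_diff_right: "rank1 cj w (u - v) = rank1 cj w u - rank1 cj w v"
  by (simp add: rank1_def vec_eq_iff algebra_simps cj_diff)

lemma outer_rank1: "outer cj x = rank1 cj x x"
  by (simp add: outer_def rank1_def)

definition col :: "'a^'p^'d \<Rightarrow> 'p \<Rightarrow> 'a^'d" where "col X j = (\<chi> i. X$i$j)"

lemma col_axis: "X *v axis j 1 = col X j"
  by (simp add: col_def matrix_vector_mult_def axis_def vec_eq_iff if_distrib cong: if_cong)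

lemma gram_sum: "gram cj (X::'a^'p^'d) = (\<Sum>j\<in>UNIV. rank1 cj (col X j) (col X j))"
  by (simp add: gram_def rank1_def col_def adj_def matrix_matrix_mult_def vec_eq_iff sum_component)

lemma norm_sq_cols: "(norm (X::'a^'p^'d))^2 = (\<Sum>j\<in>UNIV. (norm (col X j))^2)"
proof -
  have "(norm X)^2 = (\<Sum>i\<in>UNIV. \<Sum>j\<in>UNIV. inner (X$i$j) (X$i$j))"
    by (simp add: power2_norm_eq_inner inner_vec_def)
  also have "\<dots> = (\<Sum>j\<in>UNIV. \<Sum>i\<in>UNIV. inner (X$i$j) (X$i$j))" by (rule sum.swap)
  also have "\<dots> = (\<Sum>j\<in>UNIV. (norm (col X j))^2)"
    by (simp add: power2_norm_eq_inner inner_vec_def col_def)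
  finally show ?thesis .
qed

lemma inner_trace: "inner (A::'a^'n^'m) B = rp (trace (adj cj A ** B))"
proof -
  have "inner A B = rp (\<Sum>i\<in>UNIV. \<Sum>k\<in>UNIV. cj (A$i$k) * B$i$k)"
    by (simp add: inner_vec_def rp_sum inner_cj)
  also have "(\<Sum>i\<in>UNIV. \<Sum>k\<in>UNIV. cj (A$i$k) * B$i$k) = (\<Sum>k\<in>UNIV. \<Sum>i\<in>UNIV. cj (A$i$k) * B$i$k)"
    by (rule sum.swap)
  finally show ?thesis
    by (simp add: trace_def matrix_matrix_mult_def adj_def)
qed

lemma inner_mat1: "inner (mat 1 :: 'a^'n^'n) A = rp (trace A)"
  by (simp add: inner_trace)

lemma norm_mat1_sq: "(norm (mat 1 :: 'a^'n^'n))^2 = real CARD('n)"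
proof -
  have "rp (of_nat CARD('n)) = real CARD('n)"
    using rp_of_real[of "real CARD('n)"] by (simp del: rp_of_real)
  then show ?thesis by (simp add: power2_norm_eq_inner inner_mat1 trace_I)
qed

lemma psd_form: "rp (\<Sum>i\<in>UNIV. cj (v $ i) * (M *v v) $ i) = inner v (M *v v)"
  by (simp add: inner_vec_cdot cdot_def)

end


lemma matrix_add_rdistrib': "((B + C) ** A) = (B ** A) + (C ** A)"
  by (vector matrix_matrix_mult_def sum.distrib[symmetric] field_simps)
lemma matrix_diff_ldistrib': "(A::'a::ring_1^'n^'m) ** (B - C) = (A ** B) - (A ** C)"
  by (vector matrix_matrix_mult_def sum_subtractf[symmetric] field_simps)
lemma matrix_diff_rdistrib': "((B::'a::ring_1^'n^'m) - C) ** A = (B ** A) - (C ** A)"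
  by (vector matrix_matrix_mult_def sum_subtractf[symmetric] field_simps)

lemma discr:
  fixes a b c :: real
  assumes "c \<ge> 0" and h: "\<And>l. 0 \<le> a + 2*b*l + c*l^2"
  shows "b^2 \<le> a*c"
proof (cases "c = 0")
  case True
  show ?thesis
  proof (cases "b = 0")
    case False
    have "0 \<le> a + 2*b*(-(a+1)/(2*b))" using h[of "-(a+1)/(2*b)"] True by simp
    also have "\<dots> = -1" using False by (simp add: field_simps)
    finally show ?thesis by simp
  qed (use True in simp)
next
  case False
  then have c: "c > 0" using assms(1) by simp
  have "0 \<le> a + 2*b*(-b/c) + c*(-b/c)^2" by (rule h)
  also have "\<dots> = a - b^2/c" using c by (simp add: field_simps power2_eq_square)
  finally have "b^2/c \<le> a" by simp
  then show ?thesis using c by (simp add: field_simps mult.commute)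
qed

context cfield
begin

lemma mv_scaleR: "(A::'a^'n^'m) *v (r *\<^sub>R v) = r *\<^sub>R (A *v v)"
  by (simp add: matrix_vector_mult_def vec_eq_iff scaleR_sum_right mult_scaleR_right)

lemma mat_col: "((A::'a^'n^'m) ** B) $ a $ i = (A *v col B i) $ a"
  by (simp add: matrix_matrix_mult_def matrix_vector_mult_def col_def)

lemma proj_exists: "\<exists>Z::'a^'r^'q. adj cj (Y::'a^'q^'r) ** (mat 1 - Y ** Z) = 0"
proof -
  let ?S = "range (\<lambda>z::'a^'q. Y *v z)"
  have sub: "subspace ?S"
    by (rule linear_subspace_image[OF matrix_vector_mul_linear subspace_UNIV])
  have "\<forall>i. \<exists>z. adj cj Y *v (axis i 1 - Y *v z) = 0"
  proof
    fix i :: 'r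
    obtain y w where y: "y \<in> span ?S" and w: "\<And>s. s \<in> span ?S \<Longrightarrow> orthogonal w s"
      and e: "axis i 1 = y + w"
      using orthogonal_subspace_decomp_exists[of ?S "axis i 1"] by blast
    have "span ?S = ?S" using sub by simp
    with y obtain z where yz: "y = Y *v z" by auto
    let ?u = "adj cj Y *v w"
    have "Y *v ?u \<in> span ?S" by (rule span_base) simp
    then have "inner w (Y *v ?u) = 0" using w unfolding orthogonal_def by blast
    then have "inner (Y *v ?u) w = 0" by (simp add: inner_commute)
    then have "inner ?u ?u = 0" by (simp add: inner_mv)
    then have "?u = 0" by simp
    moreover have "axis i 1 - Y *v z = w" using e yz by simp
    ultimately show "\<exists>z. adj cj Y *v (axis i 1 - Y *v z) = 0" by auto
  qed
  then obtain zf where zf: "\<And>i. adj cj Y *v (axis i 1 - Y *v zf i) = 0" by metis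
  define Z :: "'a^'r^'q" where "Z = (\<chi> j i. zf i $ j)"
  have c: "col (mat 1 - Y ** Z) i = axis i 1 - Y *v zf i" for i
    by (simp add: col_def vec_eq_iff mat_def axis_def matrix_matrix_mult_def
        matrix_vector_mult_def Z_def)
  have "adj cj Y ** (mat 1 - Y ** Z) = 0"
    by (simp add: vec_eq_iff mat_col c zf)
  then show ?thesis by blast
qed

lemma projector:
  fixes X :: "'a^'p^'d"
  obtains P :: "'a^'d^'d" and Zm :: "'a^'d^'p"
  where "P = X ** Zm" "P ** X = X" "adj cj X ** P = adj cj X" "(norm P)^2 \<le> real CARD('p)"
proof -
  obtain Zm :: "'a^'d^'p" where Z: "adj cj X ** (mat 1 - X ** Zm) = 0"
    using proj_exists by blast
  obtain Wm :: "'a^'p^'d" where W: "adj cj (adj cj X) ** (mat 1 - adj cj X ** Wm) = 0"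
    using proj_exists by blast
  define P where "P = X ** Zm"
  define F where "F = adj cj X ** Wm"
  have E1: "adj cj X ** P = adj cj X"
    using Z by (simp add: P_def matrix_diff_ldistrib')
  have E2: "X ** F = X"
    using W by (simp add: F_def matrix_diff_ldistrib')
  have PP: "adj cj P ** P = adj cj P"
    by (metis E1 P_def adj_mult matrix_mul_assoc)
  have PH: "adj cj P = P"
    by (metis PP adj_adj adj_mult)
  have PX: "P ** X = X"
    by (metis E1 PH adj_adj adj_mult)
  have FF: "adj cj F ** F = adj cj F"
    by (metis E2 F_def adj_adj adj_mult matrix_mul_assoc)
  have FH: "adj cj F = F"
    by (metis FF adj_adj adj_mult)
  define E where "E = Zm ** X"
  have XE: "X ** E = X"
  proof -
    have "X ** E = (X ** Zm) ** X" by (simp add: E_def matrix_mul_assoc)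
    then show ?thesis using PX by (simp add: P_def)
  qed
  have FE: "F ** E = F"
  proof -
    have "adj cj F = adj cj Wm ** X" by (simp add: F_def adj_mult)
    then have Fd: "F = adj cj Wm ** X" using FH by simp
    have "F ** E = adj cj Wm ** (X ** E)"
      by (simp add: Fd matrix_mul_assoc)
    also have "\<dots> = F" by (simp add: XE Fd)
    finally show ?thesis .
  qed
  have trP: "trace P = trace F"
  proof -
    have "trace P = trace E" unfolding P_def E_def by (rule trace_mul_sym)
    also have "E = F ** E + (mat 1 - F) ** E"
      by (simp add: matrix_diff_rdistrib')
    also have "trace \<dots> = trace (F ** E) + trace ((mat 1 - F) ** E)"
      by (simp add: trace_def sum.distrib)
    also have "trace ((mat 1 - F) ** E) = trace (((mat 1 - F) ** Zm) ** X)"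
      by (simp add: E_def matrix_mul_assoc)
    also have "\<dots> = trace (X ** ((mat 1 - F) ** Zm))"
      by (rule trace_mul_sym)
    also have "X ** ((mat 1 - F) ** Zm) = 0"
      by (simp add: matrix_mul_assoc matrix_diff_ldistrib' E2)
    finally show ?thesis by (simp add: FE trace_def)
  qed
  have nP: "(norm P)^2 = rp (trace P)"
  proof -
    have "(norm P)^2 = rp (trace (adj cj P ** P))" by (simp only: power2_norm_eq_inner inner_trace)
    also have "\<dots> = rp (trace (adj cj P))" by (simp only: PP)
    finally show ?thesis by (simp only: PH)
  qed
  have nF: "(norm F)^2 = rp (trace F)"
  proof -
    have "(norm F)^2 = rp (trace (adj cj F ** F))" by (simp only: power2_norm_eq_inner inner_trace)
    also have "\<dots> = rp (trace (adj cj F))" by (simp only: FF)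
    finally show ?thesis by (simp only: FH)
  qed
  have "rp (trace F) = inner (mat 1) F" by (simp add: inner_mat1)
  also have "\<dots> \<le> norm (mat 1 :: 'a^'p^'p) * norm F" by (rule norm_cauchy_schwarz)
  also have "norm (mat 1 :: 'a^'p^'p) = sqrt (real CARD('p))"
    using norm_mat1_sq by (metis norm_ge_zero real_sqrt_unique)
  finally have "(norm F)^2 \<le> sqrt (real CARD('p)) * norm F" using nF by simp
  then have "norm F \<le> sqrt (real CARD('p))"
  proof (cases "norm F = 0")
    case False
    then have "norm F > 0" by simp
    moreover assume "(norm F)^2 \<le> sqrt (real CARD('p)) * norm F"
    ultimately show ?thesis by (simp add: power2_eq_square)
  qed simp
  then have "(norm F)^2 \<le> (sqrt (real CARD('p)))^2"
    by (rule power_mono) simp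
  then have "(norm F)^2 \<le> real CARD('p)" by simp
  then have "(norm P)^2 \<le> real CARD('p)" using nP nF trP by simp
  then show ?thesis using that P_def PX E1 by blast
qed

end


context cfield
begin

lemma herm_sym:
  assumes "hermitian cj A"
  shows "inner v ((A::'a^'n^'n) *v u) = inner u (A *v v)"
proof -
  have "inner v (A *v u) = inner (A *v u) v" by (simp add: inner_commute)
  also have "\<dots> = inner u (adj cj A *v v)" by (rule inner_mv)
  finally show ?thesis using assms by (simp add: hermitian_def)
qed

lemma psd_nonneg: "psd cj rp A \<Longrightarrow> inner v ((A::'a^'n^'n) *v v) \<ge> 0"
  by (simp add: psd_def psd_form)

lemma psd_cs:
  assumes "psd cj rp (A::'a^'n^'n)"
  shows "(inner u (A *v v))^2 \<le> inner u (A *v u) * inner v (A *v v)"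
proof (rule discr)
  show "0 \<le> inner v (A *v v)" using psd_nonneg[OF assms] .
  fix l :: real
  have h: "hermitian cj A" using assms by (simp add: psd_def)
  have "0 \<le> inner (u + l *\<^sub>R v) (A *v (u + l *\<^sub>R v))" using psd_nonneg[OF assms] .
  also have "\<dots> = inner u (A *v u) + l * inner v (A *v u) + l * inner u (A *v v)
      + l * l * inner v (A *v v)"
    by (simp add: matrix_vector_right_distrib mv_scaleR inner_add_left inner_add_right algebra_simps)
  also have "\<dots> = inner u (A *v u) + 2 * inner u (A *v v) * l + inner v (A *v v) * l^2"
    using herm_sym[OF h, of v u] by (simp add: power2_eq_square algebra_simps)
  finally show "0 \<le> inner u (A *v u) + 2 * inner u (A *v v) * l + inner v (A *v v) * l^2" .
qed

lemma gram_line: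
  "gram cj ((X::'a^'p^'d) + t *\<^sub>R U) = gram cj X + t *\<^sub>R (X ** adj cj U + U ** adj cj X)
     + t^2 *\<^sub>R (U ** adj cj U)"
proof -
  have "gram cj (X + t *\<^sub>R U) = (X + t *\<^sub>R U) ** (adj cj X + t *\<^sub>R adj cj U)"
    by (simp add: gram_def adj_add adj_scaleR)
  also have "\<dots> = X ** adj cj X + t *\<^sub>R (X ** adj cj U) + t *\<^sub>R (U ** adj cj X)
      + (t * t) *\<^sub>R (U ** adj cj U)"
    by (simp add: matrix_add_ldistrib matrix_add_rdistrib' matrix_scalar_ac scaleR_add_right
        flip: scalar_matrix_assoc)
  finally show ?thesis
    by (simp add: gram_def power2_eq_square scaleR_add_right algebra_simps)
qed

lemma meas_add: "meas cj rp A (S + T) = meas cj rp A S + meas cj rp A T"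
  by (simp add: meas_eq vec_eq_iff inner_add_right)
lemma meas_diff: "meas cj rp A (S - T) = meas cj rp A S - meas cj rp A T"
  by (simp add: meas_eq vec_eq_iff inner_diff_right)
lemma meas_scaleR: "meas cj rp A (r *\<^sub>R S) = r *\<^sub>R meas cj rp A S"
  by (simp add: meas_eq vec_eq_iff)

lemma fobj_line:
  fixes X U :: "'a^'p^'d" and y :: "real^'k" and A :: "'k \<Rightarrow> 'a^'d^'d"
  defines "e0 \<equiv> y - meas cj rp A (gram cj X)"
    and "m1 \<equiv> meas cj rp A (X ** adj cj U + U ** adj cj X)"
    and "m2 \<equiv> meas cj rp A (U ** adj cj U)"
  shows "fobj cj rp A y (X + t *\<^sub>R U) = inner e0 e0 + (-2 * inner e0 m1) * t
     + (inner m1 m1 - 2 * inner e0 m2) * t^2 + (2 * inner m1 m2) * t^3 + inner m2 m2 * t^4"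
proof -
  have h: "y - meas cj rp A (gram cj (X + t *\<^sub>R U)) = e0 - t *\<^sub>R m1 - t^2 *\<^sub>R m2"
    by (simp add: gram_line meas_add meas_scaleR e0_def m1_def m2_def)
  have "fobj cj rp A y (X + t *\<^sub>R U) = inner (e0 - t *\<^sub>R m1 - t^2 *\<^sub>R m2) (e0 - t *\<^sub>R m1 - t^2 *\<^sub>R m2)"
    unfolding fobj_def h power2_norm_eq_inner ..
  then show ?thesis
    by (simp add: inner_diff_left inner_diff_right
        inner_commute[of m1 e0] inner_commute[of m2 e0] inner_commute[of m2 m1]
        power2_eq_square power3_eq_cube algebra_simps power4_eq_xxxx)
qed

lemma crit:
  fixes X U :: "'a^'p^'d"
  assumes "sosp (fobj cj rp A y) X"
  shows "inner (y - meas cj rp A (gram cj X)) (meas cj rp A (X ** adj cj U + U ** adj cj X)) = 0"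
    and "2 * inner (y - meas cj rp A (gram cj X)) (meas cj rp A (U ** adj cj U))
          \<le> (norm (meas cj rp A (X ** adj cj U + U ** adj cj X)))^2"
  using sosp_poly[OF assms fobj_line[where y=y and A=A and X=X and U=U]] by (auto simp: power2_norm_eq_inner)

end


lemma iii:
  fixes \<alpha> \<beta> P s t NN a :: real
  assumes "\<alpha> > 0" "\<beta> \<ge> 0" "P \<ge> 1" "s \<ge> 0" "t \<ge> 0" "(a - t)^2 \<le> P * NN"
  shows "(1 + \<beta>/(P*\<beta>+\<alpha>)) * \<alpha> * (s+t) * s \<le> \<alpha>*(NN + s^2 + 2* s*t) + \<beta>*(a - (s+t))^2"
proof -
  define D where "D = P*\<beta> + \<alpha>"
  define \<tau> where "\<tau> = a - t"
  have D: "D > 0" using assms by (simp add: D_def add_nonneg_pos)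
  have P0: "P > 0" using assms by simp
  have k1: "\<alpha>*\<tau>^2/P \<le> \<alpha>*NN"
    using assms(1,6) P0 by (simp add: \<tau>_def field_simps)
  have id: "(\<alpha>*\<tau>^2/P + \<beta>*(\<tau>-s)^2) * (P*D) - \<alpha>*\<beta>* s^2*P = (D*\<tau> - P*\<beta>* s)^2"
    using P0 by (simp add: D_def field_simps power2_eq_square)
  have "P * (\<alpha>*\<beta>* s^2) \<le> P * ((\<alpha>*\<tau>^2/P + \<beta>*(\<tau>-s)^2) * D)"
    using id by (smt (verit) zero_le_power2 mult.commute mult.assoc)
  then have "\<alpha>*\<beta>* s^2 \<le> (\<alpha>*\<tau>^2/P + \<beta>*(\<tau>-s)^2) * D"
    using P0 by (rule mult_left_le_imp_le)
  then have k2: "\<alpha>*\<beta>* s^2/D \<le> \<alpha>*\<tau>^2/P + \<beta>*(\<tau>-s)^2"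
    by (simp add: pos_divide_le_eq[OF D])
  have "1*\<beta> \<le> P*\<beta>" by (rule mult_right_mono) (use assms in auto)
  then have bD: "\<beta>/D \<le> 1" using D assms by (simp add: D_def field_simps)
  have k3: "\<alpha>*(s*t)*(\<beta>/D) \<le> \<alpha>*(s*t)"
    by (intro mult_left_le bD) (use assms in auto)
  have "(1 + \<beta>/D) * \<alpha> * (s+t) * s = \<alpha>*(s^2 + s*t) + \<alpha>*\<beta>* s^2/D + \<alpha>*(s*t)*(\<beta>/D)"
    using D by (simp add: field_simps power2_eq_square)
  also have "\<dots> \<le> \<alpha>*(s^2 + 2* s*t) + \<alpha>*\<beta>* s^2/D"
    using k3 by (simp add: algebra_simps)
  also have "\<dots> \<le> \<alpha>*(s^2 + 2* s*t) + \<alpha>*\<tau>^2/P + \<beta>*(\<tau>-s)^2" using k2 by simp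
  also have "\<dots> \<le> \<alpha>*(NN + s^2 + 2* s*t) + \<beta>*(a - (s+t))^2"
    using k1 by (simp add: \<tau>_def algebra_simps)
  finally show ?thesis by (simp add: D_def)
qed

lemma fin:
  fixes n P \<alpha> \<beta> L E b s MM R :: real
  assumes "n > 0" "P \<ge> 1" "\<alpha> \<ge> 0" "\<beta> \<ge> 0" "L \<ge> 0"
    and cond: "(P + 2) * (1 + \<beta>/(P*\<beta>+\<alpha>)) * \<alpha> > 2 * L"
    and h1: "(P + 2) * E \<le> 2 * (n * L * b * s)"
    and h2: "(1/n) * E \<ge> R"
    and h3: "(1 + \<beta>/(P*\<beta>+\<alpha>)) * \<alpha> * b * s \<le> R"
    and h4: "\<alpha> * MM \<le> R" and "b \<ge> 0" "s \<ge> 0" "MM \<ge> 0"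
  shows "MM = 0"
proof -
  define c where "c = 1 + \<beta>/(P*\<beta>+\<alpha>)"
  have a0: "\<alpha> > 0"
  proof (rule ccontr)
    assume "\<not> \<alpha> > 0" then have "\<alpha> = 0" using assms by simp
    then show False using cond assms by simp
  qed
  have c0: "c \<ge> 0" using assms a0 by (simp add: c_def)
  have Q: "(P + 2) * ((1/n) * E) \<le> 2 * L * (b * s)"
    using h1 assms(1) by (simp add: field_simps)
  have "(P + 2) * (c * \<alpha> * (b * s)) \<le> (P + 2) * ((1/n) * E)"
    using h2 h3 assms by (intro mult_left_mono) (auto simp: c_def mult.assoc)
  with Q have A1: "((P + 2) * c * \<alpha> - 2 * L) * (b * s) \<le> ((P + 2) * c * \<alpha> - 2 * L) * 0"
    by (simp add: algebra_simps)
  have A2: "(P + 2) * c * \<alpha> - 2 * L > 0" using cond by (simp add: c_def)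
  have "b * s \<le> 0" using mult_left_le_imp_le[OF A1 A2] .
  moreover have "b * s \<ge> 0" using assms by simp
  ultimately have bs0: "b * s = 0" by simp
  have "(P + 2) * ((1/n) * E) \<le> 2 * L * 0" using Q unfolding bs0 .
  then have "(P + 2) * ((1/n) * E) \<le> 0" by simp
  then have "(1/n) * E \<le> 0" using assms by (smt (verit) mult_pos_pos)
  then have "\<alpha> * MM \<le> 0" using h2 h4 by simp
  then show ?thesis using a0 assms by (smt (verit) mult_pos_pos)
qed


context cfield
begin

lemma cdot_smul_right: "cdot cj u (c *s v) = c * cdot cj u (v::'a^'n)"
  by (simp add: cdot_def sum_distrib_left mult_ac)

lemma inner_rank1_rank1:
  "inner (rank1 cj a b) (rank1 cj c (d::'a^'n)) = rp (cdot cj b d * cdot cj c (a::'a^'m))"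
  by (simp add: inner_rank1 rank1_mv inner_vec_cdot cdot_smul_right)

lemma smul_mv: "(r *\<^sub>R (M::'a^'n^'m)) *v v = r *\<^sub>R (M *v v)"
  by (simp add: matrix_vector_mult_def vec_eq_iff scaleR_sum_right)

lemma sum_mv: "(\<Sum>k\<in>S. (M k :: 'a^'n^'m)) *v v = (\<Sum>k\<in>S. M k *v v)"
  by (induction S rule: infinite_finite_induct) (auto simp: matrix_vector_mult_add_rdistrib)

lemma meas_adj_mv: "meas_adj (A :: 'k::finite \<Rightarrow> 'a^'n^'n) z *v v = (\<Sum>k\<in>UNIV. z$k *\<^sub>R (A k *v v))"
  unfolding meas_adj_def by (subst sum_mv) (simp add: smul_mv)

lemma inner_real_vec: "inner (u::real^'k) w = (\<Sum>k\<in>UNIV. u$k * w$k)"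
  by (simp add: inner_vec_def)

lemma norm_meas_sq: "(norm (meas cj rp A S))^2 = (\<Sum>k\<in>UNIV. (inner (A k) S)^2)"
  by (simp only: power2_norm_eq_inner) (simp add: inner_real_vec meas_eq power2_eq_square)

lemma inner_sum_meas: "inner (meas cj rp A S) (meas cj rp A T) = (\<Sum>k\<in>UNIV. inner (A k) S * inner (A k) T)"
  by (simp add: inner_real_vec meas_eq)

end


context cfield
begin

lemma main:
  fixes x :: "'a^'d" and A :: "'n::finite \<Rightarrow> 'a^'d^'d" and X :: "'a^'p^'d" and \<alpha> \<beta> L :: real
  assumes psdA: "\<forall>k. psd cj rp (A k)" and ab: "\<alpha> \<ge> 0" "\<beta> \<ge> 0" "L \<ge> 0"
    and rip: "(1 / real CARD('n)) * (norm (meas cj rp A (gram cj X - outer cj x)))\<^sup>2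
            \<ge> \<alpha> * (norm (gram cj X - outer cj x))\<^sup>2 + \<beta> * ((norm X)\<^sup>2 - (norm x)\<^sup>2)\<^sup>2"
    and loew: "loewner_le cj rp ((1 / real CARD('n)) *\<^sub>R meas_adj A (meas cj rp A (outer cj x)))
                       ((L * (norm x)\<^sup>2) *\<^sub>R mat 1)"
    and cond: "(real CARD('p) + 2) * (1 + \<beta> / (real CARD('p) * \<beta> + \<alpha>)) * \<alpha> > 2 * L"
    and so: "sosp (fobj cj rp A (meas cj rp A (outer cj x))) X"
  shows "gram cj X = outer cj x"
proof -
  let ?m = "meas cj rp A"
  define y where "y = ?m (outer cj x)"
  define e0 where "e0 = y - ?m (gram cj X)"
  define n where "n = real CARD('n)"
  define p where "p = real CARD('p)"
  obtain P :: "'a^'d^'d" and Zm :: "'a^'d^'p" where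
    PZ: "P = X ** Zm" and PX: "P ** X = X" and XP: "adj cj X ** P = adj cj X"
    and nP: "(norm P)^2 \<le> p"
    using projector[of X] unfolding p_def by metis
  define z0 where "z0 = Zm *v x"
  define x1 where "x1 = X *v z0"
  define x2 where "x2 = x - x1"
  have Px: "P *v x = x1"
    by (simp add: x1_def z0_def PZ matrix_vector_mul_assoc)
  have Xx2: "adj cj X *v x2 = 0"
  proof -
    have "adj cj X *v x2 = adj cj X *v x - adj cj X *v (P *v x)"
      by (simp add: x2_def matrix_vector_mult_diff_distrib Px)
    also have "\<dots> = adj cj X *v x - (adj cj X ** P) *v x"
      by (simp add: matrix_vector_mul_assoc)
    finally show ?thesis by (simp add: XP)
  qed
  have so': "sosp (fobj cj rp A y) X" using so by (simp add: y_def)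
  note FO = crit(1)[OF so', folded e0_def]
  note SO = crit(2)[OF so', folded e0_def]
  have gX: "X ** adj cj X = gram cj X" by (simp add: gram_def)
  have f0: "inner e0 (?m (gram cj X)) = 0"
    using FO[of X] by (simp only: gX meas_add inner_add_right)
  have "X ** adj cj (rank1 cj x z0) + rank1 cj x z0 ** adj cj X = rank1 cj x1 x + rank1 cj x x1"
    by (simp only: mult_adj_rank1 rank1_mult_adj x1_def)
  then have f1: "inner e0 (?m (rank1 cj x1 x)) + inner e0 (?m (rank1 cj x x1)) = 0"
    using FO[of "rank1 cj x z0"] by (simp only: meas_add inner_add_right)
  have "X ** adj cj (rank1 cj x1 z0) + rank1 cj x1 z0 ** adj cj X = rank1 cj x1 x1 + rank1 cj x1 x1"
    by (simp only: mult_adj_rank1 rank1_mult_adj x1_def)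
  then have "inner e0 (?m (rank1 cj x1 x1)) + inner e0 (?m (rank1 cj x1 x1)) = 0"
    using FO[of "rank1 cj x1 z0"] by (simp only: meas_add inner_add_right)
  then have f2: "inner e0 (?m (rank1 cj x1 x1)) = 0" by simp
  have ox2: "outer cj x2 = rank1 cj x x - rank1 cj x1 x - rank1 cj x x1 + rank1 cj x1 x1"
    by (simp add: outer_rank1 x2_def rank1_diff_left rank1_diff_right)
  have e0e0: "inner e0 e0 = inner e0 y"
  proof -
    have "inner e0 e0 = inner e0 y - inner e0 (?m (gram cj X))"
      by (metis e0_def inner_diff_right)
    then show ?thesis using f0 by simp
  qed
  have star: "inner e0 (?m (outer cj x2)) = inner e0 e0"
  proof -
    have "inner e0 (?m (outer cj x2)) = inner e0 (?m (rank1 cj x x)) - inner e0 (?m (rank1 cj x1 x))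
       - inner e0 (?m (rank1 cj x x1)) + inner e0 (?m (rank1 cj x1 x1))"
      by (simp only: ox2 meas_add meas_diff inner_add_right inner_diff_right)
    moreover have "inner e0 (?m (rank1 cj x x)) = inner e0 e0"
      using e0e0 by (simp add: y_def outer_rank1)
    ultimately show ?thesis using f1 f2 by simp
  qed
  have herm: "hermitian cj (A k)" for k using psdA by (simp add: psd_def)
  define S where "S j = rank1 cj (col X j) x2 + rank1 cj x2 (col X j)" for j
  have SOj: "2 * inner e0 e0 \<le> (norm (?m (S j)))^2" for j
  proof -
    have "X ** adj cj (rank1 cj x2 (axis j 1)) + rank1 cj x2 (axis j 1) ** adj cj X = S j"
      by (simp add: mult_adj_rank1 rank1_mult_adj col_axis S_def)
    moreover have "rank1 cj x2 (axis j 1) ** adj cj (rank1 cj x2 (axis j 1)) = outer cj x2"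
      by (simp add: rank1_axis_sq outer_rank1)
    ultimately show ?thesis using SO[of "rank1 cj x2 (axis j 1)"] star by simp
  qed
  have Sbound: "(norm (?m (S j)))^2 \<le> 4 * (\<Sum>k\<in>UNIV. inner x2 (A k *v x2) * inner (col X j) (A k *v col X j))" for j
  proof -
    have "(norm (?m (S j)))^2 = (\<Sum>k\<in>UNIV. (inner (A k) (S j))^2)" by (rule norm_meas_sq)
    also have "\<dots> = (\<Sum>k\<in>UNIV. 4 * (inner x2 (A k *v col X j))^2)"
    proof (rule sum.cong)
      fix k
      have "inner (A k) (S j) = inner (col X j) (A k *v x2) + inner x2 (A k *v col X j)"
        by (simp add: S_def inner_add_right inner_rank1)
      also have "\<dots> = 2 * inner x2 (A k *v col X j)"
        using herm_sym[OF herm[of k], of "col X j" x2] by simp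
      finally show "(inner (A k) (S j))^2 = 4 * (inner x2 (A k *v col X j))^2"
        by (simp add: power2_eq_square)
    qed simp
    also have "\<dots> \<le> (\<Sum>k\<in>UNIV. 4 * (inner x2 (A k *v x2) * inner (col X j) (A k *v col X j)))"
      by (intro sum_mono mult_left_mono psd_cs) (use psdA in auto)
    finally show ?thesis by (simp add: sum_distrib_left)
  qed
  have gramk: "inner (A k) (gram cj X) = (\<Sum>j\<in>UNIV. inner (col X j) (A k *v col X j))" for k
    by (simp add: gram_sum inner_sum_right inner_rank1)
  have ox2k: "inner (A k) (outer cj x2) = inner x2 (A k *v x2)" for k
    by (simp add: outer_rank1 inner_rank1)
  have sumS: "(\<Sum>j\<in>UNIV. (norm (?m (S j)))^2) \<le> 4 * inner (?m (outer cj x2)) (?m (gram cj X))"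
  proof -
    have "(\<Sum>j\<in>UNIV. (norm (?m (S j)))^2)
        \<le> (\<Sum>j\<in>UNIV. 4 * (\<Sum>k\<in>UNIV. inner x2 (A k *v x2) * inner (col X j) (A k *v col X j)))"
      by (intro sum_mono Sbound)
    also have "\<dots> = 4 * (\<Sum>k\<in>UNIV. inner x2 (A k *v x2) * (\<Sum>j\<in>UNIV. inner (col X j) (A k *v col X j)))"
    proof -
      have "(\<Sum>j\<in>UNIV. 4 * (\<Sum>k\<in>UNIV. inner x2 (A k *v x2) * inner (col X j) (A k *v col X j)))
          = 4 * (\<Sum>j\<in>UNIV. \<Sum>k\<in>UNIV. inner x2 (A k *v x2) * inner (col X j) (A k *v col X j))"
        by (simp only: sum_distrib_left)
      also have "\<dots> = 4 * (\<Sum>k\<in>UNIV. \<Sum>j\<in>UNIV. inner x2 (A k *v x2) * inner (col X j) (A k *v col X j))"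
        by (subst sum.swap) (rule refl)
      also have "\<dots> = 4 * (\<Sum>k\<in>UNIV. inner x2 (A k *v x2) * (\<Sum>j\<in>UNIV. inner (col X j) (A k *v col X j)))"
        by (simp only: sum_distrib_left)
      finally show ?thesis .
    qed
    also have "\<dots> = 4 * inner (?m (outer cj x2)) (?m (gram cj X))"
      by (simp add: inner_sum_meas gramk ox2k)
    finally show ?thesis .
  qed
  have mg: "?m (gram cj X) = y - e0" by (simp add: e0_def)
  have h1a: "2 * p * inner e0 e0 \<le> 4 * inner (?m (outer cj x2)) y - 4 * inner e0 e0"
  proof -
    have "2 * p * inner e0 e0 = (\<Sum>j\<in>(UNIV::'p set). 2 * inner e0 e0)" by (simp add: p_def)
    also have "\<dots> \<le> (\<Sum>j\<in>UNIV. (norm (?m (S j)))^2)" by (intro sum_mono SOj)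
    also have "\<dots> \<le> 4 * inner (?m (outer cj x2)) (?m (gram cj X))" by (rule sumS)
    also have "\<dots> = 4 * inner (?m (outer cj x2)) y - 4 * inner e0 e0"
    proof -
      have "inner (?m (outer cj x2)) e0 = inner e0 e0" using star by (simp only: inner_commute)
      then show ?thesis by (simp only: mg inner_diff_right) simp
    qed
    finally show ?thesis .
  qed
  have lw: "inner (?m (outer cj x2)) y \<le> n * (L * (norm x)^2) * (norm x2)^2"
  proof -
    have "0 \<le> inner x2 ((((L * (norm x)\<^sup>2) *\<^sub>R mat 1) - (1 / n) *\<^sub>R meas_adj A y) *v x2)"
      using loew psd_nonneg unfolding loewner_le_def y_def n_def by blast
    also have "\<dots> = (L * (norm x)\<^sup>2) * (norm x2)^2 - (1/n) * (\<Sum>k\<in>UNIV. y$k * inner x2 (A k *v x2))"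
      by (simp add: matrix_vector_mult_diff_rdistrib smul_mv meas_adj_mv inner_diff_right
          inner_sum_right power2_norm_eq_inner)
    also have "(\<Sum>k\<in>UNIV. y$k * inner x2 (A k *v x2)) = inner (?m (outer cj x2)) y"
      by (simp add: inner_real_vec meas_eq ox2k mult.commute)
    finally show ?thesis
      by (simp add: n_def field_simps)
  qed
  have h1: "(p + 2) * inner e0 e0 \<le> 2 * (n * L * (norm x)^2 * (norm x2)^2)"
    using h1a lw by (simp add: algebra_simps)
  have mM: "?m (gram cj X - outer cj x) = - e0"
    by (simp add: meas_diff e0_def y_def)
  have h2: "(1/n) * inner e0 e0 \<ge> \<alpha> * (norm (gram cj X - outer cj x))\<^sup>2 + \<beta> * ((norm X)\<^sup>2 - (norm x)\<^sup>2)\<^sup>2"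
    using rip by (simp add: mM n_def power2_norm_eq_inner)
  define s where "s = (norm x2)^2"
  define t where "t = (norm x1)^2"
  define N where "N = gram cj X - outer cj x1"
  have cd12: "cdot cj x1 x2 = 0"
    by (simp add: x1_def cdot_mv Xx2)
  have cd21: "cdot cj x2 x1 = 0" using cd12 by (simp add: cdot_swap[of x2 x1])
  have i12: "inner x1 x2 = 0" by (simp add: inner_vec_cdot cd12)
  have xx: "x = x1 + x2" by (simp add: x2_def)
  have bst: "(norm x)^2 = s + t"
    by (simp add: xx s_def t_def power2_norm_eq_inner inner_add_left inner_add_right i12 inner_commute[of x2 x1])
  define R where "R = rank1 cj x1 x2 + rank1 cj x2 x1 + rank1 cj x2 x2"
  have MNR: "gram cj X - outer cj x = N - R"
    by (simp add: N_def R_def outer_rank1 xx rank1_add_left rank1_add_right algebra_simps)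
  have Nv: "N *v w = X *v (adj cj X *v w) - cdot cj x1 w *s x1" for w
    by (simp add: N_def matrix_vector_mult_diff_rdistrib gram_def matrix_vector_mul_assoc outer_rank1 rank1_mv)
  have Nx2: "N *v x2 = 0" by (simp add: Nv Xx2 cd12)
  have iNx1: "inner x2 (N *v x1) = 0"
  proof -
    have "inner x2 (X *v (adj cj X *v x1)) = 0"
      by (simp add: inner_commute[of x2] inner_mv Xx2)
    moreover have "inner x2 (cdot cj x1 x1 *s x1) = 0"
      by (simp add: inner_vec_cdot cdot_smul_right cd21)
    ultimately show ?thesis by (simp add: Nv inner_diff_right)
  qed
  have NR: "inner N R = 0"
    by (simp add: R_def inner_add_right inner_rank1 Nx2 iNx1)
  have RR: "inner R R = s^2 + 2 * s * t"
    by (simp add: R_def inner_add_left inner_add_right inner_rank1_rank1 cd12 cd21 cdot_self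
        s_def t_def power2_eq_square flip: of_real_mult)
  have MM: "(norm (gram cj X - outer cj x))^2 = (norm N)^2 + s^2 + 2 * s * t"
    by (simp add: MNR power2_norm_eq_inner inner_diff_left inner_diff_right NR RR inner_commute[of R N])
  have Pcol: "P *v col X j = col X j" for j
    by (simp add: col_axis[symmetric] matrix_vector_mul_assoc PX)
  have Px1: "P *v x1 = x1"
    by (simp add: x1_def matrix_vector_mul_assoc PX)
  have PN: "inner P N = (norm X)^2 - t"
  proof -
    have "inner P (gram cj X) = (\<Sum>j\<in>UNIV. inner (col X j) (col X j))"
      by (simp add: gram_sum inner_sum_right inner_rank1 Pcol)
    also have "\<dots> = (norm X)^2" by (simp add: norm_sq_cols power2_norm_eq_inner)
    finally show ?thesis
      by (simp add: N_def inner_diff_right outer_rank1 inner_rank1 Px1 t_def power2_norm_eq_inner)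
  qed
  have tr: "((norm X)^2 - t)^2 \<le> p * (norm N)^2"
  proof -
    have "((norm X)^2 - t)^2 = (inner P N)^2" by (simp add: PN)
    also have "\<dots> \<le> (norm P)^2 * (norm N)^2"
      using Cauchy_Schwarz_ineq[of P N] by (simp add: power2_norm_eq_inner)
    also have "\<dots> \<le> p * (norm N)^2" using nP by (simp add: mult_right_mono)
    finally show ?thesis .
  qed
  have n0: "n > 0" by (simp add: n_def)
  have p1: "p \<ge> 1" by (simp add: p_def)
  have s0: "s \<ge> 0" "t \<ge> 0" by (simp_all add: s_def t_def)
  have a0: "\<alpha> > 0"
  proof (rule ccontr)
    assume "\<not> \<alpha> > 0" then have "\<alpha> = 0" using ab by simp
    then show False using cond ab by simp
  qed
  have h3: "(1 + \<beta>/(p*\<beta>+\<alpha>)) * \<alpha> * (s+t) * s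
      \<le> \<alpha> * (norm (gram cj X - outer cj x))\<^sup>2 + \<beta> * ((norm X)\<^sup>2 - (norm x)\<^sup>2)\<^sup>2"
    using iii[OF a0 ab(2) p1 s0 tr] by (simp add: MM bst)
  have "(norm (gram cj X - outer cj x))\<^sup>2 = 0"
  proof (rule fin[OF n0 p1 ab(1) ab(2) ab(3) _ h1 h2])
    show "(p + 2) * (1 + \<beta>/(p*\<beta>+\<alpha>)) * \<alpha> > 2 * L" using cond by (simp add: p_def)
    show "(1 + \<beta>/(p*\<beta>+\<alpha>)) * \<alpha> * (norm x)^2 * (norm x2)^2
      \<le> \<alpha> * (norm (gram cj X - outer cj x))\<^sup>2 + \<beta> * ((norm X)\<^sup>2 - (norm x)\<^sup>2)\<^sup>2"
      using h3 by (simp add: bst s_def)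
    show "\<alpha> * (norm (gram cj X - outer cj x))\<^sup>2
      \<le> \<alpha> * (norm (gram cj X - outer cj x))\<^sup>2 + \<beta> * ((norm X)\<^sup>2 - (norm x)\<^sup>2)\<^sup>2"
      using ab by simp
  qed simp_all
  then show ?thesis by simp
qed

end

interpretation rc: cfield "id :: real \<Rightarrow> real" "id"
  by unfold_locales (simp_all add: power2_eq_square)

interpretation cc: cfield cnj Re
proof
  fix a b :: complex and r :: real
  show "cnj (a + b) = cnj a + cnj b" by simp
  show "cnj (a * b) = cnj a * cnj b" by simp
  show "cnj (cnj a) = a" by simp
  show "cnj (r *\<^sub>R a) = r *\<^sub>R cnj a" by (simp add: scaleR_conv_of_real)
  show "cnj 1 = 1" by simp
  show "inner a b = Re (cnj a * b)" by (simp add: inner_complex_def)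
  show "Re (cnj a) = Re a" by simp
  show "cnj a * a = of_real ((norm a)^2)" by (metis complex_norm_square mult.commute of_real_power)
qed

theorem theorem2:
  shows
  "(\<forall>(x::real^'d) (A::'n::finite \<Rightarrow> real^'d^'d) (\<alpha>::real) (\<beta>::real) (L::real).
      (\<forall>k. psd id id (A k)) \<and> \<alpha> \<ge> 0 \<and> \<beta> \<ge> 0 \<and> L \<ge> 0 \<and>
      (\<forall>X::real^'p^'d.
          (1 / real CARD('n)) * (norm (meas id id A (gram id X - outer id x)))\<^sup>2
            \<ge> \<alpha> * (norm (gram id X - outer id x))\<^sup>2 + \<beta> * ((norm X)\<^sup>2 - (norm x)\<^sup>2)\<^sup>2) \<and>
      loewner_le id id ((1 / real CARD('n)) *\<^sub>R meas_adj A (meas id id A (outer id x)))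
                       ((L * (norm x)\<^sup>2) *\<^sub>R mat 1) \<and>
      (real CARD('p) + 2) * (1 + \<beta> / (real CARD('p) * \<beta> + \<alpha>)) * \<alpha> > 2 * L
      \<longrightarrow> (\<forall>X::real^'p::finite^'d::finite.
             sosp (fobj id id A (meas id id A (outer id x))) X \<longrightarrow> gram id X = outer id x))
 \<and>
   (\<forall>(x::complex^'d) (A::'n \<Rightarrow> complex^'d^'d) (\<alpha>::real) (\<beta>::real) (L::real).
      (\<forall>k. psd cnj Re (A k)) \<and> \<alpha> \<ge> 0 \<and> \<beta> \<ge> 0 \<and> L \<ge> 0 \<and>
      (\<forall>X::complex^'p^'d.
          (1 / real CARD('n)) * (norm (meas cnj Re A (gram cnj X - outer cnj x)))\<^sup>2
            \<ge> \<alpha> * (norm (gram cnj X - outer cnj x))\<^sup>2 + \<beta> * ((norm X)\<^sup>2 - (norm x)\<^sup>2)\<^sup>2) \<and>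
      loewner_le cnj Re ((1 / real CARD('n)) *\<^sub>R meas_adj A (meas cnj Re A (outer cnj x)))
                        ((L * (norm x)\<^sup>2) *\<^sub>R mat 1) \<and>
      (real CARD('p) + 2) * (1 + \<beta> / (real CARD('p) * \<beta> + \<alpha>)) * \<alpha> > 2 * L
      \<longrightarrow> (\<forall>X::complex^'p^'d.
             sosp (fobj cnj Re A (meas cnj Re A (outer cnj x))) X \<longrightarrow> gram cnj X = outer cnj x))"
  apply (intro conjI allI impI)
   apply (elim conjE)
   apply (rule rc.main; (assumption | blast))
  apply (elim conjE)
  apply (rule cc.main; (assumption | blast))
  done

end
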